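(* Let $K$ be a finite field, let $L$ be the quadratic extension of $K$, and let $d$ be an integer with $\gcd(d,|L|-1)=1$ that is degenerate over $K$. Then $W_{L,d}(a)\ge 0$ for all $a\in K$.
   Context: Let $p$ be the characteristic. $\psi_L(x)=\exp(2\pi i\,\mathrm{Tr}_{L/\mathbb{F}_p}(x)/p)$ and $W_{L,d}(a)=\sum_{x\in L}\psi_L(x^d+ax)$. $d$ is degenerate over $K$ if $d\equiv p^j\pmod{|K|-1}$ for some integer $j$. *)

theory Defs
  imports "HOL-Analysis.Analysis" "HOL-Number_Theory.Cong"
begin

text \<open>The field L is modelled as a finite field type 'a; p = CHAR('a).
  ext_degree: the n with |L| = p^n.\<close>

definition ext_degree :: "'a::{field,finite} itself \<Rightarrow> nat" where
  "ext_degree _ = (THE n. CARD('a) = CHAR('a) ^ n)"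

definition abs_trace :: "'a::{field,finite} \<Rightarrow> 'a" where
  "abs_trace x = (\<Sum>i<ext_degree TYPE('a). x ^ (CHAR('a) ^ i))"

text \<open>Representative in {0..p-1} of the trace (an element of the prime field F_p).\<close>
definition trace_nat :: "'a::{field,finite} \<Rightarrow> nat" where
  "trace_nat x = (LEAST t. (of_nat t :: 'a) = abs_trace x)"

definition psi :: "'a::{field,finite} \<Rightarrow> complex" where
  "psi x = exp (2 * pi * \<i> * of_nat (trace_nat x) / of_nat CHAR('a))"

definition weil_sum :: "nat \<Rightarrow> 'a::{field,finite} \<Rightarrow> complex" where
  "weil_sum d a = (\<Sum>x\<in>(UNIV::'a set). psi (x ^ d + a * x))"

definition is_subfield :: "'a::field set \<Rightarrow> bool" where
  "is_subfield K \<longleftrightarrow> 0 \<in> K \<and> 1 \<in> K \<and>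
     (\<forall>x\<in>K. \<forall>y\<in>K. x + y \<in> K \<and> x * y \<in> K) \<and>
     (\<forall>x\<in>K. - x \<in> K \<and> inverse x \<in> K)"

definition degenerate_over :: "nat \<Rightarrow> 'a::{field,finite} set \<Rightarrow> bool" where
  "degenerate_over d K \<longleftrightarrow> (\<exists>j::nat. [d = CHAR('a) ^ j] (mod (card K - 1)))"

end

theory Submission imports Defs "HOL-Computational_Algebra.Polynomial" "HOL-Computational_Algebra.Primes"
begin

lemma prime_CHAR_ff: "prime CHAR('a::{field,finite})"
  by (rule prime_CHAR_semidom) (rule finite_imp_CHAR_pos, simp)

lemma frob_add: "((x::'a::{field,finite}) + y) ^ (CHAR('a) ^ k) = x ^ (CHAR('a) ^ k) + y ^ (CHAR('a) ^ k)"
  by (rule freshmans_dream') (auto simp: prime_CHAR_ff)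

lemma frob_neg: "(- (x::'a::{field,finite})) ^ (CHAR('a) ^ k) = - (x ^ (CHAR('a) ^ k))"
proof -
  have p: "CHAR('a) > 0" using prime_CHAR_ff[where 'a='a] prime_gt_0_nat by blast
  have "(x + - x) ^ (CHAR('a) ^ k) = x ^ (CHAR('a) ^ k) + (-x) ^ (CHAR('a) ^ k)"
    by (rule frob_add)
  moreover have "(x + - x) ^ (CHAR('a) ^ k) = 0" using p by simp
  ultimately show ?thesis by (simp add: eq_neg_iff_add_eq_0 add.commute)
qed

lemma frob_diff: "((x::'a::{field,finite}) - y) ^ (CHAR('a) ^ k) = x ^ (CHAR('a) ^ k) - y ^ (CHAR('a) ^ k)"
  using frob_add[of x "-y" k] frob_neg[of y k] by simp

lemma frob_sum: "(\<Sum>i\<in>A. (f i::'a::{field,finite})) ^ (CHAR('a) ^ k) = (\<Sum>i\<in>A. f i ^ (CHAR('a) ^ k))"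
  by (induction A rule: infinite_finite_induct)
     (auto simp: frob_add prime_gt_0_nat[OF prime_CHAR_ff])

lemma of_nat_fermat: "(of_nat n :: 'a::{field,finite}) ^ CHAR('a) = of_nat n"
proof (induction n)
  case 0 then show ?case using prime_gt_0_nat[OF prime_CHAR_ff[where 'a='a]] by simp
next
  case (Suc n)
  have "(of_nat (Suc n) :: 'a) ^ CHAR('a) = (of_nat n + 1) ^ (CHAR('a) ^ 1)" by (simp add: add.commute)
  also have "\<dots> = of_nat n ^ (CHAR('a) ^ 1) + 1 ^ (CHAR('a) ^ 1)" by (rule frob_add)
  finally show ?case using Suc by simp
qed


lemma pow_card_sub:
  fixes S :: "'a::field set"
  assumes fin: "finite S" and mul: "\<And>x y. x \<in> S \<Longrightarrow> y \<in> S \<Longrightarrow> x * y \<in> S"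
    and inv: "\<And>x. x \<in> S \<Longrightarrow> inverse x \<in> S" and x: "x \<in> S" and zero: "0 \<in> S"
  shows "x ^ card S = x"
proof (cases "x = 0")
  case True
  have "card S > 0" using fin x card_gt_0_iff by blast
  then show ?thesis using True by simp
next
  case False
  let ?S = "S - {0}"
  have "(\<Prod>y\<in>?S. x * y) = (\<Prod>y\<in>?S. y)"
  proof -
    have im: "(\<lambda>y. x * y) ` ?S = ?S"
    proof
      show "(\<lambda>y. x * y) ` ?S \<subseteq> ?S" using False mul[OF x] by auto
      show "?S \<subseteq> (\<lambda>y. x * y) ` ?S"
      proof
        fix y assume y: "y \<in> ?S"
        have "y * inverse x \<in> S" using y mul[OF _ inv[OF x], of y] by simp
        moreover have "y = x * (y * inverse x)" using False by simp
        moreover have "y * inverse x \<noteq> 0" using y False by simp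
        ultimately show "y \<in> (\<lambda>y. x * y) ` ?S" by (intro image_eqI[of _ _ "y * inverse x"]) auto
      qed
    qed
    have "inj_on (\<lambda>y. x * y) ?S" using False by (auto intro!: inj_onI)
    then have "(\<Prod>y\<in>(\<lambda>y. x * y) ` ?S. y) = (\<Prod>y\<in>?S. x * y)"
      by (simp add: prod.reindex)
    then show ?thesis using im by simp
  qed
  moreover have "(\<Prod>y\<in>?S. x * y) = x ^ card ?S * (\<Prod>y\<in>?S. y)"
    by (simp add: prod.distrib)
  moreover have "(\<Prod>y\<in>?S. y) \<noteq> 0" using fin by simp
  ultimately have "x ^ card ?S = 1" by (metis mult_cancel_right1)
  moreover have "card S = Suc (card ?S)"
    using card_Suc_Diff1[OF fin zero] by simp
  ultimately show ?thesis by simp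
qed

lemma pow_card_univ: "(x::'a::{field,finite}) ^ CARD('a) = x"
  by (rule pow_card_sub) auto

lemma roots_in:
  fixes S :: "'a::field set"
  assumes fin: "finite S" and N: "card S = N" "N \<ge> 2" and r: "\<And>y. y \<in> S \<Longrightarrow> y ^ N = y"
    and y: "y ^ N = y"
  shows "y \<in> S"
proof (rule ccontr)
  assume ny: "y \<notin> S"
  define P :: "'a poly" where "P = monom 1 N + [:0, -1:]"
  have dP: "degree P = N" unfolding P_def using N
    by (subst degree_add_eq_left) (auto simp: degree_monom_eq)
  hence "P \<noteq> 0" using N by auto
  hence "card {x. poly P x = 0} \<le> N" using card_poly_roots_bound dP by metis
  moreover have "insert y S \<subseteq> {x. poly P x = 0}"
    using r y by (auto simp: P_def poly_monom)
  moreover have "finite {x. poly P x = 0}" using \<open>P \<noteq> 0\<close> poly_roots_finite by blast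
  ultimately have "card (insert y S) \<le> N" by (meson card_mono order_trans)
  thus False using ny fin N by simp
qed


definition primefield :: "'a::{field,finite} set" where
  "primefield = range of_nat"

lemma pf_add: "a \<in> primefield \<Longrightarrow> b \<in> primefield \<Longrightarrow> a + b \<in> primefield"
  unfolding primefield_def by (auto simp flip: of_nat_add)

lemma pf_mult: "a \<in> primefield \<Longrightarrow> b \<in> primefield \<Longrightarrow> a * b \<in> primefield"
  unfolding primefield_def by (auto simp flip: of_nat_mult)

lemma pf_pow: "a \<in> primefield \<Longrightarrow> a ^ k \<in> primefield"
  unfolding primefield_def by (auto simp flip: of_nat_power)

lemma pf_minus1: "(-1 :: 'a::{field,finite}) \<in> primefield"
proof -
  have p: "CHAR('a) \<ge> 1" using prime_gt_0_nat[OF prime_CHAR_ff[where 'a='a]] by simp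
  have "(of_nat (CHAR('a) - 1) :: 'a) = of_nat CHAR('a) - 1" using p by (simp add: of_nat_diff)
  then have "(of_nat (CHAR('a) - 1) :: 'a) = -1" by simp
  then show ?thesis unfolding primefield_def by (metis rangeI)
qed

lemma pf_inverse:
  assumes e: "(e::'a::{field,finite}) \<in> primefield"
  shows "inverse e \<in> primefield"
proof (cases "e = 0")
  case True then show ?thesis using e by simp
next
  case False
  have p: "CHAR('a) \<ge> 2" using prime_ge_2_nat[OF prime_CHAR_ff[where 'a='a]] by simp
  obtain n where n: "e = of_nat n" using e unfolding primefield_def by auto
  have "e ^ CHAR('a) = e" using n of_nat_fermat by simp
  moreover have "e ^ CHAR('a) = e * e * e ^ (CHAR('a) - 2)"
    using p by (metis (no_types, lifting) add_2_eq_Suc' le_add_diff_inverse2 mult.assoc power_Suc power_add power_one_right)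
  ultimately have "e * (e * e ^ (CHAR('a) - 2)) = e * 1" by (simp add: mult.assoc)
  then have "e * e ^ (CHAR('a) - 2) = 1" using False by (metis mult_left_cancel)
  then have "inverse e = e ^ (CHAR('a) - 2)" by (metis inverse_unique)
  then show ?thesis using pf_pow[OF e] by simp
qed

lemma card_primefield: "card (primefield :: 'a::{field,finite} set) = CHAR('a)"
proof -
  have p: "CHAR('a) > 0" using prime_gt_0_nat[OF prime_CHAR_ff[where 'a='a]] by simp
  have "primefield = (of_nat ` {..<CHAR('a)} :: 'a set)"
  proof
    show "primefield \<subseteq> (of_nat ` {..<CHAR('a)} :: 'a set)"
    proof
      fix e :: 'a assume "e \<in> primefield"
      then obtain n where n: "e = of_nat n" unfolding primefield_def by auto
      have "(of_nat n :: 'a) = of_nat (n mod CHAR('a))"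
        by (simp add: of_nat_eq_iff_cong_CHAR cong_def)
      moreover have "n mod CHAR('a) < CHAR('a)" using p by simp
      ultimately show "e \<in> of_nat ` {..<CHAR('a)}" using n by blast
    qed
  qed (auto simp: primefield_def)
  moreover have "inj_on (of_nat :: nat \<Rightarrow> 'a) {..<CHAR('a)}"
    by (auto intro!: inj_onI simp: of_nat_eq_iff_cong_CHAR cong_def)
  ultimately show ?thesis by (metis card_image card_lessThan)
qed

lemma grow_subspace:
  assumes "N \<le> CARD('a::{field,finite})"
  shows "\<exists>(H::'a set) k. 0 \<in> H \<and> (\<forall>x\<in>H. \<forall>y\<in>H. x + y \<in> H) \<and>
     (\<forall>c\<in>primefield. \<forall>x\<in>H. c * x \<in> H) \<and> card H = CHAR('a) ^ k \<and> N \<le> card H"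
  using assms
proof (induction N)
  case 0
  show ?case by (rule exI[of _ "{0}"], rule exI[of _ 0]) auto
next
  case (Suc N)
  from Suc.IH[OF Suc_leD[OF Suc.prems]] obtain H :: "'a set" and k where H0: "0 \<in> H" and Hadd: "\<forall>x\<in>H. \<forall>y\<in>H. x + y \<in> H"
    and Hmul: "\<forall>c\<in>primefield. \<forall>x\<in>H. c * x \<in> H" and Hc: "card H = CHAR('a) ^ k"
    and HN: "N \<le> card H" by (elim exE conjE)
  show ?case
  proof (cases "Suc N \<le> card H")
    case True then show ?thesis using H0 Hadd Hmul Hc by blast
  next
    case False
    then have "card H < CARD('a)" using Suc.prems HN by simp
    then obtain x where x: "x \<notin> H" by (metis UNIV_I card_mono finite subsetI leD)
    define H' where "H' = (\<lambda>(c, h). c * x + h) ` (primefield \<times> H)"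
    have inj: "inj_on (\<lambda>(c, h). c * x + h) (primefield \<times> H)"
    proof (rule inj_onI, clarify)
      fix c h c' h' assume c: "c \<in> primefield" and h: "h \<in> H" and c': "c' \<in> primefield"
        and h': "h' \<in> H" and eq: "c * x + h = c' * x + h'"
      show "c = c' \<and> h = h'"
      proof (cases "c = c'")
        case True then show ?thesis using eq by simp
      next
        case False
        define e where "e = c + (-1) * c'"
        have eP: "e \<in> primefield" unfolding e_def using c c' pf_add pf_mult pf_minus1 by blast
        have e0: "e \<noteq> 0" using False unfolding e_def by simp
        have "e * x = h' + (-1) * h" unfolding e_def using eq by (simp add: algebra_simps)
        moreover have "h' + (-1) * h \<in> H" using Hadd Hmul h h' pf_minus1 by blast
        ultimately have "e * x \<in> H" by simp
        then have "inverse e * (e * x) \<in> H" using Hmul pf_inverse[OF eP] by blast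
        then have "x \<in> H" using e0 by (simp add: mult.assoc[symmetric])
        then show ?thesis using x by simp
      qed
    qed
    have cardH': "card H' = CHAR('a) ^ Suc k"
      unfolding H'_def using card_image[OF inj] by (simp add: card_cartesian_product card_primefield Hc)
    have "card H \<ge> 1" using H0 by (metis One_nat_def Suc_leI card_gt_0_iff finite empty_iff)
    moreover have "CHAR('a) \<ge> 2" using prime_ge_2_nat[OF prime_CHAR_ff[where 'a='a]] by simp
    ultimately have "CHAR('a) ^ Suc k \<ge> 2 * card H" using Hc by simp
    then have "Suc N \<le> card H'" using cardH' HN \<open>card H \<ge> 1\<close> by linarith
    moreover have "0 \<in> H'" unfolding H'_def using H0
      by (intro image_eqI[of _ _ "(0, 0)"]) (auto simp: primefield_def intro: range_eqI[of _ _ 0])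
    moreover have "\<forall>u\<in>H'. \<forall>v\<in>H'. u + v \<in> H'"
    proof clarify
      fix u v :: 'a assume "u \<in> H'" "v \<in> H'"
      then obtain c h c' h' where "c \<in> primefield" "h \<in> H" "c' \<in> primefield" "h' \<in> H"
        and "u = c * x + h" "v = c' * x + h'" unfolding H'_def by auto
      then show "u + v \<in> H'" unfolding H'_def using pf_add Hadd
        by (intro image_eqI[of _ _ "(c + c', h + h')"]) (auto simp: algebra_simps)
    qed
    moreover have "\<forall>e\<in>primefield. \<forall>u\<in>H'. e * u \<in> H'"
    proof clarify
      fix e u :: 'a assume "e \<in> primefield" "u \<in> H'"
      then obtain c h where "c \<in> primefield" "h \<in> H" and "u = c * x + h" unfolding H'_def by auto
      then show "e * u \<in> H'" unfolding H'_def using pf_mult Hmul \<open>e \<in> primefield\<close>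
        by (intro image_eqI[of _ _ "(e * c, e * h)"]) (auto simp: algebra_simps)
    qed
    ultimately show ?thesis using cardH' by blast
  qed
qed

lemma card_prime_power: "\<exists>n. CARD('a::{field,finite}) = CHAR('a) ^ n"
proof -
  obtain H :: "'a set" and k where "card H = CHAR('a) ^ k" "CARD('a) \<le> card H"
    using grow_subspace[of "CARD('a)", where 'a='a] by auto
  moreover have "card H \<le> CARD('a)" by (rule card_mono) auto
  ultimately have "CARD('a) = CHAR('a) ^ k" by linarith
  then show ?thesis by blast
qed


lemma ext_degree_eq: "CARD('a::{field,finite}) = CHAR('a) ^ ext_degree TYPE('a)"
proof -
  obtain n where n: "CARD('a) = CHAR('a) ^ n" using card_prime_power by blast
  have p: "CHAR('a) > 1" using prime_gt_1_nat[OF prime_CHAR_ff[where 'a='a]] .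
  have "ext_degree TYPE('a) = n" unfolding ext_degree_def
  proof (rule the_equality)
    show "CARD('a) = CHAR('a) ^ n" by (rule n)
    fix m assume "CARD('a) = CHAR('a) ^ m"
    then show "m = n" using n p by (metis power_inject_exp)
  qed
  then show ?thesis using n by simp
qed

lemma frob_full: "(x::'a::{field,finite}) ^ (CHAR('a) ^ ext_degree TYPE('a)) = x"
  using pow_card_univ[of x] ext_degree_eq[where 'a='a] by simp

lemma abs_trace_add: "abs_trace ((x::'a::{field,finite}) + y) = abs_trace x + abs_trace y"
  unfolding abs_trace_def by (simp add: frob_add sum.distrib)

lemma abs_trace_pow: "abs_trace (x::'a::{field,finite}) ^ CHAR('a) = abs_trace x"
proof -
  let ?p = "CHAR('a)" and ?n = "ext_degree TYPE('a)"
  have "abs_trace x ^ ?p = abs_trace x ^ (?p ^ 1)" by simp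
  also have "\<dots> = (\<Sum>i<?n. (x ^ (?p ^ i)) ^ (?p ^ 1))" unfolding abs_trace_def by (rule frob_sum)
  also have "\<dots> = (\<Sum>i<?n. x ^ (?p ^ Suc i))" by (simp add: power_mult[symmetric] mult.commute)
  also have "\<dots> = (\<Sum>i<?n. x ^ (?p ^ i))"
  proof -
    have "(\<Sum>i<Suc ?n. x ^ (?p ^ i)) = x ^ (?p ^ 0) + (\<Sum>i<?n. x ^ (?p ^ Suc i))"
      by (rule sum.lessThan_Suc_shift)
    moreover have "(\<Sum>i<Suc ?n. x ^ (?p ^ i)) = (\<Sum>i<?n. x ^ (?p ^ i)) + x ^ (?p ^ ?n)"
      by simp
    ultimately show ?thesis using frob_full[of x] by simp
  qed
  finally show ?thesis unfolding abs_trace_def .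
qed

lemma abs_trace_frob: "abs_trace ((x::'a::{field,finite}) ^ CHAR('a)) = abs_trace x"
proof -
  have "abs_trace (x ^ CHAR('a)) = (\<Sum>i<ext_degree TYPE('a). (x ^ (CHAR('a) ^ i)) ^ (CHAR('a) ^ 1))"
    unfolding abs_trace_def by (simp add: power_mult[symmetric] mult.commute)
  also have "\<dots> = abs_trace x ^ (CHAR('a) ^ 1)" unfolding abs_trace_def by (rule frob_sum[symmetric])
  finally show ?thesis using abs_trace_pow[of x] by simp
qed

lemma abs_trace_pf: "abs_trace (x::'a::{field,finite}) \<in> primefield"
proof (rule roots_in[where N = "CHAR('a)"])
  show "finite (primefield :: 'a set)" by simp
  show "card (primefield :: 'a set) = CHAR('a)" by (rule card_primefield)
  show "CHAR('a) \<ge> 2" using prime_ge_2_nat[OF prime_CHAR_ff[where 'a='a]] .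
  show "y ^ CHAR('a) = y" if "y \<in> primefield" for y :: 'a
    using that of_nat_fermat unfolding primefield_def by auto
  show "abs_trace x ^ CHAR('a) = abs_trace x" by (rule abs_trace_pow)
qed

lemma of_trace_nat: "(of_nat (trace_nat x) :: 'a::{field,finite}) = abs_trace x"
proof -
  obtain t where "(of_nat t :: 'a) = abs_trace x" using abs_trace_pf[of x] unfolding primefield_def by auto
  then show ?thesis unfolding trace_nat_def by (rule LeastI)
qed

lemma exp_cong:
  fixes p :: nat
  assumes "p > 0" "[m = m'] (mod p)"
  shows "exp (2 * pi * \<i> * of_nat m / of_nat p) = exp (2 * pi * \<i> * of_nat m' / of_nat p)"
proof -
  have "m mod p = m' mod p" using assms(2) by (simp add: cong_def)
  have m: "m = m mod p + p * (m div p)" by simp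
  have m': "m' = m' mod p + p * (m' div p)" by simp
  have ex: "exp (2 * pi * \<i> * of_nat (r + p * k) / of_nat p) = exp (2 * pi * \<i> * of_nat r / of_nat p)"
    for r k :: nat
  proof -
    have "2 * pi * \<i> * of_nat (r + p * k) / of_nat p = 2 * pi * \<i> * of_nat r / of_nat p + of_nat k * (2 * pi * \<i>)"
      using assms(1) by (simp add: field_simps)
    then show ?thesis by (simp add: exp_add exp_of_nat_mult)
  qed
  show ?thesis using ex[of "m mod p" "m div p"] ex[of "m' mod p" "m' div p"] m m' \<open>m mod p = m' mod p\<close>
    by metis
qed

lemma psi_add: "psi ((x::'a::{field,finite}) + y) = psi x * psi y"
proof -
  have p: "CHAR('a) > 0" using prime_gt_0_nat[OF prime_CHAR_ff[where 'a='a]] .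
  have "(of_nat (trace_nat (x + y)) :: 'a) = of_nat (trace_nat x + trace_nat y)"
    by (simp add: of_trace_nat abs_trace_add)
  then have c: "[trace_nat (x + y) = trace_nat x + trace_nat y] (mod CHAR('a))"
    by (simp only: of_nat_eq_iff_cong_CHAR)
  have "psi (x + y) = exp (2 * pi * \<i> * of_nat (trace_nat x + trace_nat y) / of_nat CHAR('a))"
    unfolding psi_def by (rule exp_cong[OF p c])
  also have "\<dots> = psi x * psi y" unfolding psi_def
    by (simp add: exp_add[symmetric] add_divide_distrib distrib_left)
  finally show ?thesis .
qed

lemma psi_trace0: "abs_trace (x::'a::{field,finite}) = 0 \<Longrightarrow> psi x = 1"
proof -
  assume "abs_trace x = 0"
  then have "trace_nat x = 0" unfolding trace_nat_def by (intro Least_equality) auto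
  then show ?thesis unfolding psi_def by simp
qed

lemma psi_frob: "psi ((x::'a::{field,finite}) ^ (CHAR('a) ^ k)) = psi x"
proof (induction k)
  case (Suc k)
  have "x ^ (CHAR('a) ^ Suc k) = (x ^ (CHAR('a) ^ k)) ^ CHAR('a)"
    by (simp add: power_mult[symmetric] mult.commute)
  moreover have "trace_nat (y ^ CHAR('a)) = trace_nat y" for y :: 'a
    unfolding trace_nat_def abs_trace_frob ..
  ultimately show ?case using Suc unfolding psi_def by simp
qed simp


lemma sum_split_add: "(\<Sum>i<a + b. f i) = (\<Sum>i<a. f i) + (\<Sum>i<b. f (a + i))" for b :: nat
  by (induction b) (simp_all add: add.assoc)

lemma frob_inj: "inj (\<lambda>x::'a::{field,finite}. x ^ (CHAR('a) ^ k))"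
proof (rule injI)
  fix x y :: 'a assume "x ^ (CHAR('a) ^ k) = y ^ (CHAR('a) ^ k)"
  then have "(x - y) ^ (CHAR('a) ^ k) = 0" by (simp add: frob_diff)
  then show "x = y" by simp
qed

lemma reduction: "weil_sum (d * CHAR('a) ^ k) b = weil_sum d ((b::'a::{field,finite}) ^ (CHAR('a) ^ k))"
proof -
  let ?P = "CHAR('a) ^ k"
  let ?g = "\<lambda>y. psi (y ^ d + b ^ ?P * y)"
  have surj: "range (\<lambda>x::'a. x ^ ?P) = UNIV"
    by (rule finite_UNIV_inj_surj[OF _ frob_inj]) simp
  have "weil_sum d (b ^ ?P) = sum ?g (range (\<lambda>x::'a. x ^ ?P))"
    unfolding weil_sum_def surj ..
  also have "\<dots> = (\<Sum>x\<in>UNIV. ?g (x ^ ?P))"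
    by (subst sum.reindex[OF frob_inj]) simp
  also have "\<dots> = (\<Sum>x\<in>UNIV. psi (x ^ (d * ?P) + b * x))"
  proof (rule sum.cong[OF refl])
    fix x :: 'a
    have "(x ^ ?P) ^ d + b ^ ?P * x ^ ?P = x ^ (d * ?P) + (b * x) ^ ?P"
      by (simp add: power_mult[symmetric] mult.commute power_mult_distrib)
    then show "?g (x ^ ?P) = psi (x ^ (d * ?P) + b * x)"
      by (simp add: psi_add psi_frob)
  qed
  finally show ?thesis unfolding weil_sum_def by simp
qed

locale subfield_setup =
  fixes K :: "'a::{field,finite} set"
  assumes sub: "is_subfield K" and cardL: "CARD('a) = card K ^ 2"
begin

lemma K0: "0 \<in> K" and K1: "1 \<in> K"
  and Kadd: "x \<in> K \<Longrightarrow> y \<in> K \<Longrightarrow> x + y \<in> K"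
  and Kmul: "x \<in> K \<Longrightarrow> y \<in> K \<Longrightarrow> x * y \<in> K"
  and Kneg: "x \<in> K \<Longrightarrow> - x \<in> K"
  and Kinv: "x \<in> K \<Longrightarrow> inverse x \<in> K"
  using sub unfolding is_subfield_def by auto

lemma Kfin: "finite K" by simp

lemma Kpow: "x \<in> K \<Longrightarrow> x ^ n \<in> K"
  by (induction n) (auto intro: Kmul K1)

lemma q2: "card K \<ge> 2"
proof -
  have "{0, 1} \<subseteq> K" using K0 K1 by auto
  then have "card {0::'a, 1} \<le> card K" by (rule card_mono[OF Kfin])
  then show ?thesis by simp
qed

lemma Kfrob: "c \<in> K \<Longrightarrow> c ^ card K = c"
  by (rule pow_card_sub[OF Kfin Kmul Kinv _ K0])

lemma Kroots: "y ^ card K = y \<Longrightarrow> y \<in> K"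
  by (rule roots_in[OF Kfin refl q2 Kfrob])

lemma q_pow: "\<exists>m. card K = CHAR('a) ^ m \<and> ext_degree TYPE('a) = 2 * m \<and> m \<ge> 1"
proof -
  have pr: "prime CHAR('a)" by (rule prime_CHAR_ff)
  have "card K dvd CHAR('a) ^ ext_degree TYPE('a)"
  proof -
    have "CARD('a) = card K * card K" using cardL by (simp add: power2_eq_square)
    then have "card K dvd CARD('a)" by simp
    then show ?thesis using ext_degree_eq[where 'a='a] by simp
  qed
  then obtain m where m: "card K = CHAR('a) ^ m" using divides_primepow_nat[OF pr] by blast
  have "CHAR('a) ^ ext_degree TYPE('a) = CHAR('a) ^ (2 * m)"
    using cardL ext_degree_eq[where 'a='a] m by (simp add: power_mult[symmetric] mult.commute)
  then have "ext_degree TYPE('a) = 2 * m" using prime_gt_1_nat[OF pr] by simp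
  moreover have "m \<ge> 1" using q2 m by (cases m) auto
  ultimately show ?thesis using m by blast
qed

lemma trace_anti:
  fixes y :: 'a
  assumes y: "y ^ card K = - y"
  shows "abs_trace y = 0"
proof -
  obtain m where m: "card K = CHAR('a) ^ m" "ext_degree TYPE('a) = 2 * m" using q_pow by blast
  have "abs_trace y = (\<Sum>i<m + m. y ^ (CHAR('a) ^ i))" unfolding abs_trace_def m(2) by (simp add: mult_2)
  also have "\<dots> = (\<Sum>i<m. y ^ (CHAR('a) ^ i)) + (\<Sum>i<m. y ^ (CHAR('a) ^ (m + i)))"
    by (rule sum_split_add)
  also have "(\<Sum>i<m. y ^ (CHAR('a) ^ (m + i))) = (\<Sum>i<m. - (y ^ (CHAR('a) ^ i)))"
  proof (rule sum.cong[OF refl])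
    fix i
    have "y ^ (CHAR('a) ^ (m + i)) = (y ^ card K) ^ (CHAR('a) ^ i)"
      by (simp add: m(1) power_add power_mult)
    also have "\<dots> = - (y ^ (CHAR('a) ^ i))" by (simp add: y frob_neg)
    finally show "y ^ (CHAR('a) ^ (m + i)) = - (y ^ (CHAR('a) ^ i))" .
  qed
  finally show ?thesis by (simp add: sum_negf)
qed


lemma Kunit: "c \<in> K \<Longrightarrow> c \<noteq> 0 \<Longrightarrow> c ^ (card K - 1) = 1"
proof -
  assume c: "c \<in> K" "c \<noteq> 0"
  have "c * c ^ (card K - 1) = c ^ card K" using q2 by (metis Suc_diff_1 less_le_trans pos2 power_Suc)
  also have "\<dots> = c * 1" using Kfrob[OF c(1)] by simp
  finally show ?thesis using c(2) by (metis mult_left_cancel)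
qed

definition Ssum :: "'a \<Rightarrow> complex" where
  "Ssum s = (\<Sum>c\<in>K. psi (c * s))"

lemma Ssum_full: "(\<And>c. c \<in> K \<Longrightarrow> psi (c * s) = 1) \<Longrightarrow> Ssum s = of_nat (card K)"
  unfolding Ssum_def by simp

lemma Ssum_zero:
  assumes c0: "c0 \<in> K" "psi (c0 * s) \<noteq> 1"
  shows "Ssum s = 0"
proof -
  have k1: "c + c0 \<in> K" if "c \<in> K" for c using Kadd[OF that c0(1)] .
  have k2: "c - c0 \<in> K" if "c \<in> K" for c using Kadd[OF that Kneg[OF c0(1)]] by simp
  have "Ssum s = (\<Sum>c\<in>K. psi ((c + c0) * s))"
    unfolding Ssum_def
    by (rule sum.reindex_bij_witness[of _ "\<lambda>c. c + c0" "\<lambda>c. c - c0"]) (auto simp: k1 k2)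
  also have "\<dots> = Ssum s * psi (c0 * s)"
    unfolding Ssum_def by (simp add: distrib_right psi_add sum_distrib_right)
  finally have "Ssum s * (1 - psi (c0 * s)) = 0" by (simp add: algebra_simps)
  then show ?thesis using c0(2) by simp
qed

lemma Ssum_cases: "Ssum s = 0 \<or> Ssum s = of_nat (card K)"
  using Ssum_zero Ssum_full by blast


lemma exists_z0: "\<exists>z0::'a. z0 \<noteq> 0 \<and> z0 ^ card K = - z0"
proof -
  obtain m where m: "card K = CHAR('a) ^ m" using q_pow by blast
  have "card K * 1 < card K * card K" using q2 by (intro mult_strict_left_mono) auto
  then have lt: "card K < CARD('a)" using cardL by (simp add: power2_eq_square)
  have "K \<noteq> UNIV"
  proof
    assume "K = UNIV"
    then have "card K = CARD('a)" by simp
    then show False using lt by simp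
  qed
  then obtain y :: 'a where y: "y \<notin> K" by blast
  define z0 where "z0 = y - y ^ card K"
  have "z0 ^ card K = y ^ card K - (y ^ card K) ^ card K"
    unfolding z0_def using frob_diff[of y "y ^ card K" m] by (simp only: m)
  also have "(y ^ card K) ^ card K = y"
  proof -
    have "(y ^ card K) ^ card K = y ^ CARD('a)" using cardL by (simp add: power_mult[symmetric] power2_eq_square)
    then show ?thesis using pow_card_univ[of y] by simp
  qed
  finally have "z0 ^ card K = y ^ card K - y" .
  then have "z0 ^ card K = - z0" unfolding z0_def by (simp only: minus_diff_eq)
  moreover have "z0 \<noteq> 0"
  proof
    assume "z0 = 0"
    then have "y ^ card K = y" unfolding z0_def by simp
    then have "y \<in> K" by (rule Kroots)
    then show False using y by contradiction
  qed
  ultimately have "z0 \<noteq> 0 \<and> z0 ^ card K = - z0" by (intro conjI)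
  then show ?thesis by (intro exI[of _ z0])
qed

lemma main_d1:
  assumes d1: "d \<ge> 1" and dc: "[d = 1] (mod (card K - 1))" and b: "b \<in> K"
  shows "weil_sum d b \<in> \<real> \<and> 0 \<le> Re (weil_sum d b)"
proof -
  define q where "q = card K"
  have q2': "q \<ge> 2" using q2 unfolding q_def .
  obtain t where t: "d = t * (q - 1) + 1" using dc d1 cong_le_nat[of 1 d] unfolding q_def by auto
  define f where "f x = x ^ d + b * x" for x :: 'a
  have cd: "c ^ d = c" if c: "c \<in> K" for c
  proof (cases "c = 0")
    case True then show ?thesis using d1 by simp
  next
    case False
    have "c ^ d = (c ^ (q - 1)) ^ t * c" unfolding t by (simp add: power_mult[symmetric] mult.commute)
    then show ?thesis using Kunit[OF c False] unfolding q_def by simp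
  qed
  have fK: "f (c * x) = c * f x" if "c \<in> K" for c x
    unfolding f_def using cd[OF that] by (simp add: power_mult_distrib algebra_simps)
  have f0: "f 0 = 0" unfolding f_def using d1 by simp
  let ?U = "UNIV - {0::'a}"
  let ?K = "K - {0}"
  define R where "R = (\<Sum>x\<in>?U. psi (f x))"
  have psi0: "psi (0::'a) = 1"
  proof (rule psi_trace0)
    have "CHAR('a) > 0" using prime_gt_0_nat[OF prime_CHAR_ff[where 'a='a]] .
    then have h: "(0::'a) ^ (CHAR('a) ^ i) = 0" for i by simp
    show "abs_trace (0::'a) = 0" unfolding abs_trace_def by (intro sum.neutral ballI h)
  qed
  have W: "weil_sum d b = 1 + R"
  proof -
    have "weil_sum d b = psi (f 0) + R"
      unfolding weil_sum_def R_def f_def[symmetric] by (subst sum.remove[of _ 0]) auto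
    then show ?thesis using f0 psi0 by simp
  qed
  have Rc: "R = (\<Sum>x\<in>?U. psi (c * f x))" if c: "c \<in> ?K" for c
  proof -
    have "R = (\<Sum>x\<in>?U. psi (f (c * x)))" unfolding R_def
      by (rule sum.reindex_bij_witness[of _ "\<lambda>x. c * x" "\<lambda>x. x / c"]) (use c in auto)
    then show ?thesis using fK c by simp
  qed
  have "of_nat (q - 1) * R = (\<Sum>c\<in>?K. R)" unfolding q_def using K0 by simp
  also have "\<dots> = (\<Sum>c\<in>?K. \<Sum>x\<in>?U. psi (c * f x))" by (rule sum.cong[OF refl]) (rule Rc)
  also have "\<dots> = (\<Sum>x\<in>?U. \<Sum>c\<in>?K. psi (c * f x))" by (rule sum.swap)
  also have "\<dots> = (\<Sum>x\<in>?U. Ssum (f x) - 1)"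
  proof (rule sum.cong[OF refl])
    fix x
    have "Ssum (f x) = psi (0 * f x) + (\<Sum>c\<in>?K. psi (c * f x))"
      unfolding Ssum_def using K0 by (subst sum.remove[of _ 0]) auto
    then show "(\<Sum>c\<in>?K. psi (c * f x)) = Ssum (f x) - 1" using psi0 by simp
  qed
  also have "\<dots> = (\<Sum>x\<in>?U. Ssum (f x)) - of_nat (q * q - 1)"
    using cardL by (simp add: sum_subtractf q_def power2_eq_square)
  finally have Req: "of_nat (q - 1) * R = (\<Sum>x\<in>?U. Ssum (f x)) - of_nat (q * q - 1)" .
  define g where "g x = (if Ssum (f x) = 0 then 0 else real q)" for x
  have Sg: "Ssum (f x) = of_real (g x)" for x
  proof (cases "Ssum (f x) = 0")
    case True then show ?thesis unfolding g_def by simp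
  next
    case False
    then have "Ssum (f x) = of_nat q" using Ssum_cases[of "f x"] unfolding q_def by blast
    then show ?thesis unfolding g_def using False by simp
  qed
  have g0: "g x \<ge> 0" for x unfolding g_def by simp
  obtain z0 :: 'a where z0: "z0 \<noteq> 0" "z0 ^ q = - z0" using exists_z0 unfolding q_def by blast
  define Z where "Z = (\<lambda>c. c * z0) ` ?K"
  have "inj_on (\<lambda>c. c * z0) ?K" using z0(1) by (intro inj_onI) simp
  then have "card Z = card ?K" unfolding Z_def by (rule card_image)
  also have "card ?K = q - 1" unfolding q_def using K0 by (simp add: card_Diff_singleton)
  finally have cardZ: "card Z = q - 1" .
  have ZU: "Z \<subseteq> ?U" unfolding Z_def using z0(1) by (auto simp del: Diff_iff)
  have gZ: "g z = real q" if zZ: "z \<in> Z" for z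
  proof -
    obtain c where c: "c \<in> K" "c \<noteq> 0" and zc: "z = c * z0" using zZ by (auto simp: Z_def)
    have zq: "z ^ q = - z" unfolding zc using Kfrob[OF c(1)] z0(2) unfolding q_def by (simp add: power_mult_distrib)
    have z_ne: "z \<noteq> 0" using c z0 zc by simp
    have zq1: "z ^ (q - 1) = -1"
    proof -
      have qs: "q = Suc (q - 1)" using q2' by simp
      have "z * z ^ (q - 1) = z ^ q" by (subst (2) qs) (simp only: power_Suc)
      then have "z * z ^ (q - 1) = z * (-1)" using zq by simp
      then show ?thesis using z_ne by (metis mult_left_cancel)
    qed
    have fz: "f z = ((-1) ^ t + b) * z"
    proof -
      have "z ^ d = (z ^ (q - 1)) ^ t * z" unfolding t by (simp add: power_mult[symmetric] mult.commute)
      then show ?thesis unfolding f_def using zq1 by (simp add: algebra_simps)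
    qed
    have "psi (c' * f z) = 1" if c': "c' \<in> K" for c'
    proof -
      define e where "e = c' * ((-1) ^ t + b)"
      have eK: "e \<in> K" unfolding e_def by (rule Kmul[OF c' Kadd[OF Kpow[OF Kneg[OF K1]] b]])
      have "(e * z) ^ card K = - (e * z)"
        using Kfrob[OF eK] zq unfolding q_def by (simp add: power_mult_distrib)
      then have "abs_trace (e * z) = 0" by (rule trace_anti)
      then show ?thesis using fz unfolding e_def by (simp add: psi_trace0 mult.assoc)
    qed
    then have "Ssum (f z) = of_nat q" unfolding q_def by (rule Ssum_full)
    then show ?thesis unfolding g_def using q2' by simp
  qed
  have sumg: "(\<Sum>x\<in>?U. g x) \<ge> real q * real (q - 1)"
  proof -
    have "(\<Sum>x\<in>Z. g x) = real q * real (q - 1)" using gZ cardZ by simp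
    moreover have "(\<Sum>x\<in>Z. g x) \<le> (\<Sum>x\<in>?U. g x)" by (rule sum_mono2) (use ZU g0 in auto)
    ultimately show ?thesis by simp
  qed
  define G where "G = real (q - 1) + (\<Sum>x\<in>?U. g x) - real (q * q - 1)"
  have "of_nat (q - 1) * weil_sum d b = of_real G"
    unfolding W G_def using Req by (simp add: Sg algebra_simps)
  then have Wr: "weil_sum d b = of_real (G / real (q - 1))" using q2' by (simp add: field_simps)
  have "real (q * q - 1) = real (q - 1) * (real q + 1)" using q2' by (simp add: of_nat_diff algebra_simps)
  then have "G \<ge> 0" unfolding G_def using sumg q2' by (simp add: of_nat_diff algebra_simps)
  then show ?thesis unfolding Wr using q2' by simp
qed

end


lemma pow_q_iter: "c \<in> K \<Longrightarrow> subfield_setup K \<Longrightarrow> c ^ (card K ^ j) = c"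
proof (induction j)
  case (Suc j)
  have "c ^ (card K ^ Suc j) = (c ^ card K) ^ (card K ^ j)" by (simp add: power_mult)
  moreover have "c ^ card K = c" by (rule subfield_setup.Kfrob[OF Suc.prems(2,1)])
  ultimately show ?case using Suc.IH[OF Suc.prems] by simp
qed simp

theorem corollary4p5:
  fixes K :: "'a::{field,finite} set" and d :: nat and a :: 'a
  assumes "is_subfield K"
    and "CARD('a) = card K ^ 2"
    and "coprime d (CARD('a) - 1)"
    and "degenerate_over d K"
    and "a \<in> K"
  shows "weil_sum d a \<in> \<real> \<and> 0 \<le> Re (weil_sum d a)"
proof -
  interpret S: subfield_setup K using assms(1,2) by unfold_locales
  let ?p = "CHAR('a)"
  obtain m where m: "card K = ?p ^ m" "m \<ge> 1" using S.q_pow by blast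
  obtain j where j: "[d = ?p ^ j] (mod (card K - 1))" using assms(4) unfolding degenerate_over_def by blast
  define k where "k = (m - 1) * j"
  define b where "b = a ^ (?p ^ j)"
  have bK: "b \<in> K" unfolding b_def by (rule S.Kpow[OF assms(5)])
  have jk: "j + k = m * j" unfolding k_def using m(2) by (simp add: algebra_simps)
  have "b ^ (?p ^ k) = a ^ (?p ^ (j + k))" unfolding b_def by (simp add: power_mult[symmetric] power_add)
  also have "\<dots> = a ^ (card K ^ j)" unfolding jk m(1) by (simp add: power_mult)
  also have "\<dots> = a" by (rule pow_q_iter[OF assms(5)]) (rule S.subfield_setup_axioms)
  finally have ba: "b ^ (?p ^ k) = a" .
  have "weil_sum d a = weil_sum (d * ?p ^ k) b" using reduction[of d k b] ba by simp
  moreover have "d * ?p ^ k \<ge> 1"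
  proof -
    have "d \<noteq> 0"
    proof
      assume "d = 0"
      then have "CARD('a) - 1 = 1" using assms(3) by simp
      moreover have "card K \<ge> 2" by (rule S.q2)
      then have "card K ^ 2 \<ge> 2 ^ 2" by (rule power_mono) simp
      ultimately show False using assms(2) by simp
    qed
    moreover have "?p ^ k > 0" using prime_gt_0_nat[OF prime_CHAR_ff[where 'a='a]] by simp
    ultimately show ?thesis by (simp add: Suc_le_eq)
  qed
  moreover have "[d * ?p ^ k = 1] (mod (card K - 1))"
  proof -
    have A: "[d * ?p ^ k = ?p ^ j * ?p ^ k] (mod (card K - 1))" by (rule cong_mult[OF j cong_refl])
    have B: "?p ^ j * ?p ^ k = card K ^ j" unfolding m(1) by (simp add: power_add[symmetric] jk power_mult)
    have e: "card K = 1 * (card K - 1) + 1" using S.q2 by simp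
    have "1 \<le> card K" using S.q2 by simp
    then have iff: "[card K = 1] (mod (card K - 1)) \<longleftrightarrow> (\<exists>q. card K = q * (card K - 1) + 1)"
      by (rule cong_le_nat)
    have "[card K = 1] (mod (card K - 1))" unfolding iff using e by blast
    then have "[card K ^ j = 1 ^ j] (mod (card K - 1))" by (rule cong_pow)
    then have C: "[card K ^ j = 1] (mod (card K - 1))" by simp
    show ?thesis using cong_trans[OF A[unfolded B] C] .
  qed
  ultimately show ?thesis using S.main_d1[OF _ _ bK] by simp
qed

end
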